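(* Let $g:\mathbb R\to(-\infty,\infty]$ be convex. Let $T\subseteq\mathbb R$ be an open set which is a countable union of pairwise disjoint bounded open intervals $(a_k,b_k)$, $k\in\mathbb N$, and let $f:T\to(-\infty,\infty]$ be such that for each $k$ the restriction $f|_{(a_k,b_k)}$ is convex and $\lim_{t\to a_k^+}f(t)=g(a_k)$, $\lim_{t\to b_k^-}f(t)=g(b_k)$. Then the function $h:\mathbb R\to(-\infty,\infty]$ defined by $h(t)=\max\{f(t),g(t)\}$ for $t\in T$ and $h(t)=g(t)$ for $t\notin T$ is convex on $\mathbb R$. *)

theory Defs
  imports "HOL-Analysis.Analysis"
begin

definition ext_convex_on :: "real set \<Rightarrow> (real \<Rightarrow> ereal) \<Rightarrow> bool" where
  "ext_convex_on S f \<longleftrightarrow> convex S \<and>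
     (\<forall>x\<in>S. \<forall>y\<in>S. \<forall>u::real. 0 < u \<and> u < 1 \<longrightarrow>
        f ((1 - u) * x + u * y) \<le> ereal (1 - u) * f x + ereal u * f y)"

end

theory Submission
  imports Defs
begin

lemma core_lim:
  fixes F :: "real \<Rightarrow> ereal"
  assumes ev: "\<forall>\<^sub>F s in at_right a. F p \<le> ereal (1 - (p-s)/(y-s)) * F s + ereal ((p-s)/(y-s)) * F y"
    and lim: "(F \<longlongrightarrow> ereal Ar) (at_right a)"
    and Fy: "F y = ereal Yr"
    and ap: "a < y"
  shows "F p \<le> ereal (1 - (p-a)/(y-a)) * ereal Ar + ereal ((p-a)/(y-a)) * ereal Yr"
proof -
  define v where "v = (\<lambda>s::real. (p-s)/(y-s))"
  have fin: "\<forall>\<^sub>F s in at_right a. F s \<noteq> \<infinity> \<and> F s \<noteq> -\<infinity>"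
  proof -
    have "\<forall>\<^sub>F s in at_right a. F s < ereal (Ar+1)" by (rule order_tendstoD(2)[OF lim]) simp
    moreover have "\<forall>\<^sub>F s in at_right a. F s > ereal (Ar-1)" by (rule order_tendstoD(1)[OF lim]) simp
    ultimately show ?thesis by eventually_elim auto
  qed
  have ev2: "\<forall>\<^sub>F s in at_right a. F p \<le> ereal ((1 - v s) * real_of_ereal (F s) + v s * Yr)"
    using ev fin
  proof eventually_elim
    case (elim s) then show ?case by (cases "F s") (auto simp: v_def Fy)
  qed
  show ?thesis
  proof (cases "F p")
    case MInf then show ?thesis by simp
  next
    case PInf
    from ev2 have "\<forall>\<^sub>F s in at_right a. False" by eventually_elim (simp add: PInf)
    then show ?thesis by (simp add: eventually_False)
  next
    case (real P)
    have "P \<le> (1 - v a) * Ar + v a * Yr"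
    proof (rule tendsto_le[OF trivial_limit_at_right_real])
      have "(v \<longlongrightarrow> v a) (at_right a)" unfolding v_def
        by (rule tendsto_intros | use ap in simp)+
      moreover have "((\<lambda>s. real_of_ereal (F s)) \<longlongrightarrow> Ar) (at_right a)" using lim by simp
      ultimately show "((\<lambda>s. (1 - v s) * real_of_ereal (F s) + v s * Yr) \<longlongrightarrow> (1 - v a) * Ar + v a * Yr) (at_right a)"
        by (intro tendsto_add tendsto_mult tendsto_diff tendsto_const)
      show "((\<lambda>s. P) \<longlongrightarrow> P) (at_right a)" by simp
      show "\<forall>\<^sub>F s in at_right a. P \<le> (1 - v s) * real_of_ereal (F s) + v s * Yr"
        using ev2 by eventually_elim (simp add: real)
    qed
    then show ?thesis by (simp add: real v_def)
  qed
qed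

lemma extend_left:
  fixes F :: "real \<Rightarrow> ereal"
  assumes conv: "ext_convex_on S F" and sub: "S \<subseteq> {a<..}"
    and evS: "\<forall>\<^sub>F s in at_right a. s \<in> S"
    and lim: "(F \<longlongrightarrow> A) (at_right a)" and A: "A \<noteq> -\<infinity>"
    and Fprop: "\<forall>s\<in>S. F s \<noteq> -\<infinity>"
  shows "ext_convex_on (insert a S) (F(a:=A))"
proof -
  obtain c where c: "c > a" "\<And>s. a < s \<Longrightarrow> s < c \<Longrightarrow> s \<in> S"
    using evS unfolding eventually_at_right_field by blast
  have cS: "convex S" using conv by (simp add: ext_convex_on_def)
  have iS: "is_interval S" using cS by (simp add: is_interval_convex_1)
  have "is_interval (insert a S)"
    unfolding is_interval_1
  proof (intro ballI allI impI)
    fix l r x assume H0: "l \<in> insert a S" "r \<in> insert a S" and H1: "l \<le> x \<and> x \<le> r"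
    have H: "l \<in> insert a S" "r \<in> insert a S" "l \<le> x" "x \<le> r" using H0 H1 by auto
    show "x \<in> insert a S"
    proof (cases "x = a")
      case True then show ?thesis by simp
    next
      case False
      have ra: "r \<in> S" using H sub False by auto
      have "a \<le> l" using H sub by auto
      hence xa: "a < x" using H False by auto
      define s0 where "s0 = (a + min c x)/2"
      have "s0 \<in> S" using c xa unfolding s0_def by (intro c) auto
      moreover have "s0 \<le> x" using xa c unfolding s0_def by auto
      ultimately have "x \<in> S" using iS ra H unfolding is_interval_1 by blast
      then show ?thesis by simp
    qed
  qed
  hence cvx: "convex (insert a S)" by (simp add: is_interval_convex_1)
  have key: "F ((1-u)*a+u*y) \<le> ereal (1-u) * A + ereal u * F y"
    if y: "y \<in> S" and u: "0<u" "u<1" for y u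
  proof -
    have ya: "a < y" using y sub by auto
    define p where "p = (1-u)*a+u*y"
    have e1: "p - a = u*(y-a)" "y - p = (1-u)*(y-a)" by (simp_all add: p_def algebra_simps)
    have pos1: "0 < u*(y-a)" using ya u by auto
    have pos2: "0 < (1-u)*(y-a)" using ya u by auto
    have pa1: "a < p" using pos1 e1(1) by linarith
    have pa2: "p < y" using pos2 e1(2) by linarith
    note pa = pa1 pa2
    show ?thesis
    proof (cases "A = \<infinity> \<or> F y = \<infinity>")
      case True then show ?thesis using u A Fprop y by auto
    next
      case False
      then obtain Ar Yr where AY: "A = ereal Ar" "F y = ereal Yr" using A Fprop y
        by (cases A; cases "F y") auto
      have ev: "\<forall>\<^sub>F s in at_right a. F p \<le> ereal (1 - (p-s)/(y-s)) * F s + ereal ((p-s)/(y-s)) * F y"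
      proof -
        have "\<forall>\<^sub>F s in at_right a. s < p" using pa(1) eventually_at_right_field by blast
        with evS show ?thesis
        proof eventually_elim
          case (elim s)
          then have sp: "s < p" and sS: "s \<in> S" by auto
          have v: "0 < (p-s)/(y-s)" "(p-s)/(y-s) < 1" using sp pa by (auto simp: field_simps)
          have ys: "y - s \<noteq> 0" using sp pa by auto
          have m: "(p-s)/(y-s) * (y-s) = p-s" using ys by simp
          have lin: "\<And>w::real. (1 - w) * s + w * y = s + w * (y-s)" by (simp add: algebra_simps)
          have "(1 - (p-s)/(y-s)) * s + (p-s)/(y-s) * y = s + (p-s)/(y-s) * (y-s)" by (rule lin)
          hence "(1 - (p-s)/(y-s)) * s + (p-s)/(y-s) * y = p" using m by simp
          then show ?case using conv sS y v unfolding ext_convex_on_def by metis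
        qed
      qed
      have uu: "(p-a)/(y-a) = u" using ya unfolding p_def by (auto simp: field_simps)
      have "F p \<le> ereal (1 - (p-a)/(y-a)) * ereal Ar + ereal ((p-a)/(y-a)) * ereal Yr"
        using core_lim[OF ev lim[unfolded AY] AY(2) ya] .
      hence "F p \<le> ereal (1 - u) * ereal Ar + ereal u * ereal Yr" unfolding uu .
      then show ?thesis using AY by (simp only: p_def)
    qed
  qed
  show ?thesis unfolding ext_convex_on_def
  proof (intro conjI cvx ballI allI impI)
    fix x y u :: real assume x: "x \<in> insert a S" and y: "y \<in> insert a S" and u: "0 < u \<and> u < 1"
    show "(F(a := A)) ((1 - u) * x + u * y) \<le> ereal (1 - u) * (F(a := A)) x + ereal u * (F(a := A)) y"
    proof (cases "x = a")
      case xa: True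
      show ?thesis
      proof (cases "y = a")
        case True
        then show ?thesis using xa u A by (cases A) (auto simp: algebra_simps)
      next
        case False
        with y have yS: "y \<in> S" by simp
        have "a < (1-u)*a+u*y" using yS sub u by (auto simp: algebra_simps)
        then show ?thesis using key[OF yS] u xa False by simp
      qed
    next
      case xna: False
      with x have xS: "x \<in> S" by simp
      show ?thesis
      proof (cases "y = a")
        case True
        have xa: "a < x" using xS sub by auto
        have q1: "0 < (1-u)*(x-a)" using xa u by auto
        have q2: "(1-(1-u))*a+(1-u)*x = a + (1-u)*(x-a)" by (simp add: algebra_simps)
        have "a < (1-(1-u))*a+(1-u)*x" using q1 q2 by linarith
        moreover have "(1-(1-u))*a+(1-u)*x = (1 - u) * x + u * y" using True by simp
        ultimately show ?thesis using key[OF xS, of "1-u"] u xna True by (simp add: add.commute)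
      next
        case False
        with y have yS: "y \<in> S" by simp
        have "(1 - u) * x + u * y \<in> S" using cS xS yS u
          by (simp add: convex_alt)
        hence "(1 - u) * x + u * y \<noteq> a" using sub by auto
        then show ?thesis using conv xS yS u xna False unfolding ext_convex_on_def by simp
      qed
    qed
  qed
qed

lemma ext_convex_reflect:
  assumes "ext_convex_on S F"
  shows "ext_convex_on (uminus ` S) (\<lambda>t. F (- t))"
  unfolding ext_convex_on_def
proof (intro conjI ballI allI impI)
  show "convex (uminus ` S)" using assms convex_negations[of S] by (simp add: ext_convex_on_def)
next
  fix x y u :: real assume x: "x \<in> uminus ` S" and y: "y \<in> uminus ` S" and u: "0 < u \<and> u < 1"
  from x obtain x0 where x0: "x0 \<in> S" "x = - x0" by auto
  from y obtain y0 where y0: "y0 \<in> S" "y = - y0" by auto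
  have e: "- ((1 - u) * x + u * y) = (1 - u) * x0 + u * y0" using x0 y0 by simp
  have "F ((1 - u) * x0 + u * y0) \<le> ereal (1 - u) * F x0 + ereal u * F y0"
    using assms x0 y0 u unfolding ext_convex_on_def by blast
  then show "F (- ((1 - u) * x + u * y)) \<le> ereal (1 - u) * F (- x) + ereal u * F (- y)"
    unfolding e using x0 y0 by simp
qed

lemma extend_right:
  fixes F :: "real \<Rightarrow> ereal"
  assumes conv: "ext_convex_on S F" and sub: "S \<subseteq> {..<b}"
    and evS: "\<forall>\<^sub>F s in at_left b. s \<in> S"
    and lim: "(F \<longlongrightarrow> B) (at_left b)" and B: "B \<noteq> -\<infinity>"
    and Fprop: "\<forall>s\<in>S. F s \<noteq> -\<infinity>"
  shows "ext_convex_on (insert b S) (F(b:=B))"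
proof -
  have c1: "ext_convex_on (uminus ` S) (\<lambda>t. F (- t))" by (rule ext_convex_reflect[OF conv])
  have s1: "uminus ` S \<subseteq> {-b<..}" using sub by auto
  have e1: "\<forall>\<^sub>F s in at_right (-b). s \<in> uminus ` S"
  proof -
    have "\<forall>\<^sub>F s in at_right (-b). - s \<in> S" using evS unfolding eventually_at_left_to_right .
    then show ?thesis by eventually_elim (metis image_eqI minus_minus)
  qed
  have l1: "((\<lambda>t. F (- t)) \<longlongrightarrow> B) (at_right (-b))" using lim unfolding filterlim_at_left_to_right .
  have p1: "\<forall>s\<in>uminus ` S. F (- s) \<noteq> -\<infinity>" using Fprop by auto
  have "ext_convex_on (insert (-b) (uminus ` S)) ((\<lambda>t. F (- t))(-b := B))"
    by (rule extend_left[OF c1 s1 e1 l1 B p1])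
  from ext_convex_reflect[OF this] show ?thesis
  proof -
    assume h: "ext_convex_on (uminus ` insert (- b) (uminus ` S)) (\<lambda>t. ((\<lambda>t. F (- t))(- b := B)) (- t))"
    have "uminus ` insert (- b) (uminus ` S) = insert b S" by (auto simp: image_image)
    moreover have "(\<lambda>t. ((\<lambda>t. F (- t))(- b := B)) (- t)) = F(b:=B)" by (auto simp: fun_eq_iff)
    ultimately show ?thesis using h by simp
  qed
qed

theorem lemma3p5:
  fixes g f :: "real \<Rightarrow> ereal" and T :: "real set"
    and K :: "nat set" and a b :: "nat \<Rightarrow> real"
  assumes g_proper: "\<forall>t. g t \<noteq> -\<infinity>"
    and g_convex: "ext_convex_on UNIV g"
    and ab: "\<forall>k\<in>K. a k < b k"
    and disj: "\<forall>k\<in>K. \<forall>l\<in>K. k \<noteq> l \<longrightarrow> {a k<..<b k} \<inter> {a l<..<b l} = {}"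
    and T_def: "T = (\<Union>k\<in>K. {a k<..<b k})"
    and f_proper: "\<forall>t\<in>T. f t \<noteq> -\<infinity>"
    and f_convex: "\<forall>k\<in>K. ext_convex_on {a k<..<b k} f"
    and lim_left: "\<forall>k\<in>K. (f \<longlongrightarrow> g (a k)) (at_right (a k))"
    and lim_right: "\<forall>k\<in>K. (f \<longlongrightarrow> g (b k)) (at_left (b k))"
  shows "ext_convex_on UNIV (\<lambda>t. if t \<in> T then max (f t) (g t) else g t)"
proof -
  define h where "h = (\<lambda>t. if t \<in> T then max (f t) (g t) else g t)"
  have gh: "g t \<le> h t" for t by (auto simp: h_def)
  have hfin: "h t \<noteq> -\<infinity>" for t using gh[of t] g_proper by auto
  have fh: "f t \<le> h t" if "t \<in> T" for t using that by (auto simp: h_def)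
  have hT: "h t = g t" if "t \<notin> T" for t using that by (auto simp: h_def)
  have aT: "a k \<notin> T" if k: "k \<in> K" for k
  proof
    assume "a k \<in> T"
    then obtain l where l: "l \<in> K" "a l < a k" "a k < b l" using T_def by auto
    have "l \<noteq> k" using l by auto
    define t where "t = (a k + min (b k) (b l)) / 2"
    have "t \<in> {a k<..<b k} \<inter> {a l<..<b l}" using l ab k unfolding t_def by auto
    then show False using disj k l \<open>l \<noteq> k\<close> by blast
  qed
  have bT: "b k \<notin> T" if k: "k \<in> K" for k
  proof
    assume "b k \<in> T"
    then obtain l where l: "l \<in> K" "a l < b k" "b k < b l" using T_def by auto
    have "l \<noteq> k" using l by auto
    define t where "t = (b k + max (a k) (a l)) / 2"
    have "t \<in> {a k<..<b k} \<inter> {a l<..<b l}" using l ab k unfolding t_def by auto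
    then show False using disj k l \<open>l \<noteq> k\<close> by blast
  qed
  have Fconv: "ext_convex_on {a k..b k} (f(a k := g (a k), b k := g (b k)))" if k: "k \<in> K" for k
  proof -
    have abk: "a k < b k" using ab k by auto
    have c1: "ext_convex_on (insert (a k) {a k<..<b k}) (f(a k := g (a k)))"
    proof (rule extend_left)
      show "ext_convex_on {a k<..<b k} f" using f_convex k by auto
      show "{a k<..<b k} \<subseteq> {a k<..}" by auto
      show "\<forall>\<^sub>F s in at_right (a k). s \<in> {a k<..<b k}"
        unfolding eventually_at_right_field using abk by auto
      show "(f \<longlongrightarrow> g (a k)) (at_right (a k))" using lim_left k by auto
      show "g (a k) \<noteq> -\<infinity>" using g_proper by auto
      show "\<forall>s\<in>{a k<..<b k}. f s \<noteq> -\<infinity>" using f_proper k T_def by auto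
    qed
    have i1: "insert (a k) {a k<..<b k} = {a k..<b k}" using abk by auto
    have i2: "insert (b k) {a k..<b k} = {a k..b k}" using abk by auto
    have "ext_convex_on (insert (b k) {a k..<b k}) ((f(a k := g (a k)))(b k := g (b k)))"
    proof (rule extend_right)
      show "ext_convex_on {a k..<b k} (f(a k := g (a k)))" using c1 i1 by simp
      show "{a k..<b k} \<subseteq> {..<b k}" by auto
      show "\<forall>\<^sub>F s in at_left (b k). s \<in> {a k..<b k}"
        unfolding eventually_at_left_field using abk by auto
      have "\<forall>\<^sub>F s in at_left (b k). f s = (f(a k := g (a k))) s"
        unfolding eventually_at_left_field using abk by auto
      then show "((f(a k := g (a k))) \<longlongrightarrow> g (b k)) (at_left (b k))"
        using lim_right k tendsto_cong by blast
      show "g (b k) \<noteq> -\<infinity>" using g_proper by auto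
      show "\<forall>s\<in>{a k..<b k}. (f(a k := g (a k))) s \<noteq> -\<infinity>" using f_proper k T_def g_proper by auto
    qed
    then show ?thesis using i2 by simp
  qed
  have gconv: "g ((1-u)*x+u*y) \<le> ereal (1-u) * g x + ereal u * g y" if "0<u" "u<1" for x y u
    using g_convex that unfolding ext_convex_on_def by blast
  have main: "h ((1-u)*x+u*y) \<le> ereal (1-u) * h x + ereal u * h y" if xy: "x<y" and u: "0<u" "u<1" for x y u
  proof -
    consider "h x = \<infinity>" | "h y = \<infinity>" | X Y where "h x = ereal X" "h y = ereal Y"
      using hfin[of x] hfin[of y] by (cases "h x"; cases "h y") auto
    then show ?thesis
    proof cases
      case 1 then show ?thesis using u hfin[of y] by simp
    next
      case 2 then show ?thesis using u hfin[of x] by simp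
    next
      case (3 X Y)
      define p where "p = (1-u)*x+u*y"
      have e1: "p - x = u*(y-x)" "y - p = (1-u)*(y-x)" by (simp_all add: p_def algebra_simps)
      have pos1: "0 < u*(y-x)" using xy u by auto
      have pos2: "0 < (1-u)*(y-x)" using xy u by auto
      have px: "x < p" using pos1 e1(1) by linarith
      have py: "p < y" using pos2 e1(2) by linarith
      define m where "m = (Y-X)/(y-x)"
      define L where "L t = X + (t-x)*m" for t
      have Llin: "(1-ww)*L r1 + ww*L r2 = L ((1-ww)*r1+ww*r2)" for ww r1 r2
        unfolding L_def by (simp add: algebra_simps)
      have Lx: "L x = X" by (simp add: L_def)
      have Ly: "L y = Y" using xy by (simp add: L_def m_def)
      have Lp: "ereal (1-u) * ereal X + ereal u * ereal Y = ereal (L p)"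
        using Llin[of u x y] Lx Ly by (simp add: p_def)
      have hL: "h c \<le> ereal (L c)" if c: "x < c" "c < y" "c \<notin> T" for c
      proof -
        define al where "al = (c-x)/(y-x)"
        have al: "0 < al" "al < 1" using c unfolding al_def by (auto simp: field_simps)
        have cc: "c = (1-al)*x + al*y"
        proof -
          have "al * (y-x) = c - x" using xy unfolding al_def by simp
          moreover have "(1-al)*x + al*y = x + al*(y-x)" by (simp add: algebra_simps)
          ultimately show ?thesis by simp
        qed
        have "h c = g c" using hT c by auto
        also have "\<dots> \<le> ereal (1-al) * g x + ereal al * g y" using gconv[OF al] cc by simp
        also have "\<dots> \<le> ereal (1-al) * ereal X + ereal al * ereal Y"
          using gh[of x] gh[of y] 3 al
          by (intro add_mono ereal_mult_left_mono) auto
        also have "\<dots> = ereal (L c)"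
          using Llin[of al x y] Lx Ly cc by simp
        finally show ?thesis .
      qed
      show ?thesis
      proof (cases "p \<in> T \<and> h p \<noteq> g p")
        case False
        then have "h p = g p" using hT by auto
        also have "\<dots> \<le> ereal (1-u) * g x + ereal u * g y" using gconv[OF u] by (simp add: p_def)
        also have "\<dots> \<le> ereal (1-u) * h x + ereal u * h y"
          using gh[of x] gh[of y] u by (intro add_mono ereal_mult_left_mono) auto
        finally show ?thesis by (simp add: p_def)
      next
        case True
        then have pT: "p \<in> T" and hpf: "h p = f p" by (auto simp: h_def max_def split: if_splits)
        obtain k where k: "k \<in> K" "a k < p" "p < b k" using pT T_def by auto
        have abk: "a k < b k" using ab k by auto
        define xq where "xq = max x (a k)"
        define yq where "yq = min y (b k)"
        define Fk where "Fk = f(a k := g (a k), b k := g (b k))"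
        have xqp: "xq < p" and pyq: "p < yq" using px py k unfolding xq_def yq_def by auto
        have xqI: "xq \<in> {a k..b k}" using xqp pyq k unfolding xq_def yq_def by auto
        have yqI: "yq \<in> {a k..b k}" using xqp pyq k unfolding xq_def yq_def by auto
        have Fh: "Fk t \<le> h t" if tI: "t \<in> {a k..b k}" for t
        proof -
          consider "t = a k" | "t = b k" | "a k < t" "t < b k" using tI by force
          then show ?thesis
          proof cases
            case 1 then show ?thesis using hT[OF aT[OF k(1)]] abk by (simp add: Fk_def)
          next
            case 2 then show ?thesis using hT[OF bT[OF k(1)]] abk by (simp add: Fk_def)
          next
            case 3
            then have "t \<in> T" using T_def k by auto
            then show ?thesis using fh 3 by (simp add: Fk_def)
          qed
        qed
        have hxq: "h xq \<le> ereal (L xq)"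
        proof (cases "xq = x")
          case True then show ?thesis using 3 Lx by simp
        next
          case False
          then have "xq = a k" "x < a k" unfolding xq_def by auto
          then show ?thesis using hL[of "a k"] k py aT[OF k(1)] by simp
        qed
        have hyq: "h yq \<le> ereal (L yq)"
        proof (cases "yq = y")
          case True then show ?thesis using 3 Ly by simp
        next
          case False
          then have "yq = b k" "b k < y" unfolding yq_def by auto
          then show ?thesis using hL[of "b k"] k px bT[OF k(1)] by simp
        qed
        define vv where "vv = (p-xq)/(yq-xq)"
        have vv: "0 < vv" "vv < 1" using xqp pyq unfolding vv_def by (auto simp: field_simps)
        have pv: "p = (1-vv)*xq + vv*yq"
        proof -
          have "vv * (yq-xq) = p - xq" using xqp pyq unfolding vv_def by simp
          moreover have "(1-vv)*xq + vv*yq = xq + vv*(yq-xq)" by (simp add: algebra_simps)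
          ultimately show ?thesis by simp
        qed
        have "p \<noteq> a k" "p \<noteq> b k" using k by auto
        then have "h p = Fk p" using hpf by (simp add: Fk_def)
        also have "\<dots> \<le> ereal (1-vv) * Fk xq + ereal vv * Fk yq"
          using Fconv[OF k(1)] xqI yqI vv pv unfolding ext_convex_on_def Fk_def by metis
        also have "\<dots> \<le> ereal (1-vv) * h xq + ereal vv * h yq"
          using Fh[OF xqI] Fh[OF yqI] vv by (intro add_mono ereal_mult_left_mono) auto
        also have "\<dots> \<le> ereal (1-vv) * ereal (L xq) + ereal vv * ereal (L yq)"
          using hxq hyq vv by (intro add_mono ereal_mult_left_mono) auto
        also have "\<dots> = ereal (L p)" using Llin[of vv xq yq] pv by simp
        also have "\<dots> = ereal (1-u) * h x + ereal u * h y" using Lp 3 by simp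
        finally show ?thesis by (simp add: p_def)
      qed
    qed
  qed
  have "ext_convex_on UNIV h"
    unfolding ext_convex_on_def
  proof (intro conjI convex_UNIV ballI allI impI)
    fix x y u :: real assume u: "0 < u \<and> u < 1"
    consider "x < y" | "x = y" | "y < x" by linarith
    then show "h ((1 - u) * x + u * y) \<le> ereal (1 - u) * h x + ereal u * h y"
    proof cases
      case 1 then show ?thesis using main u by auto
    next
      case 2
      then show ?thesis using u hfin[of x]
        by (cases "h x") (auto simp: algebra_simps)
    next
      case 3
      have "h ((1-(1-u))*y+(1-u)*x) \<le> ereal (1-(1-u)) * h y + ereal (1-u) * h x"
        using main[OF 3, of "1-u"] u by auto
      moreover have "(1-(1-u))*y+(1-u)*x = (1 - u) * x + u * y" by simp
      ultimately show ?thesis by (simp add: add.commute)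
    qed
  qed
  then show ?thesis unfolding h_def .
qed

end
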